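(* Let $\beta\in\mathbb{R}^n_{>}$ and $\theta\in\Theta^\beta$, with agents indexed so that $v_1(\theta_1)\ge v_2(\theta_2)\ge\dots\ge v_n(\theta_n)$ (and $v_{n+1}(\theta_{n+1}):=0$). Then every efficient Nash equilibrium of $\mathbf{1}$-GSP for $\theta$ yields revenue at least $$\frac12\left(R(\theta)-\sum_{j=1}^{k}(\beta_j-\beta_{j+1})\cdot v_{j+1}(\theta_{j+1})\right).$$
   Context: Sponsored search setting: agents $N=\{1,\dots,n\}$, slots $1,\dots,k$ with $k\le n$; an outcome assigns agents to distinct positions, position $j\le k$ meaning slot $j$, others getting nothing (value 0); utilities quasilinear. $\mathbb{R}^n_{>}$: vectors $\beta$ with $1=\beta_1>\dots>\beta_k>0$ and $\beta_j=0$ for $j>k$ (so $\beta_{k+1}=0$). $\Theta^\beta$: type profiles in which agent $i$ has $v_i(\theta_i)\ge0$ and values slot $j$ at $\beta_j v_i(\theta_i)$. VCG outcome for $\theta$: the assignment and Clarke payments of the VCG mechanism (bids on every slot, bid-maximizing assignment) under truthful bids; $R(\theta)$ is its revenue. $\mathbf{1}$-GSP: each agent submits a single $b_i\ge0$ used as its bid on every slot; agents are ranked by $b_i$ (ties arbitrary), the rank-$j$ agent ($j\le k$) gets slot $j$ and pays the $(j+1)$-st highest submitted value ($0$ if none). Revenue = sum of payments. A Nash equilibrium (complete information, for $\theta$) is a profile of submissions from which no agent gains strictly by unilateral deviation; it is efficient if its assignment maximizes $\sum_i$ (true value of agent $i$ for its assigned slot). *)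

theory Defs
  imports Complex_Main
begin

(* Agents are 1..n, positions are 1..n; position j <= k is slot j, positions > k get nothing.
   beta :: nat => real gives beta_j (beta_j = 0 for j > k), v :: nat => real gives v_i(theta_i). *)

definition beta_ok :: "nat \<Rightarrow> nat \<Rightarrow> (nat \<Rightarrow> real) \<Rightarrow> bool" where
  "beta_ok n k \<beta> \<longleftrightarrow> k \<le> n \<and> \<beta> 1 = 1 \<and> (\<forall>j. 1 \<le> j \<and> j < k \<longrightarrow> \<beta> (j+1) < \<beta> j)
      \<and> \<beta> k > 0 \<and> (\<forall>j. k < j \<longrightarrow> \<beta> j = 0)"

definition assignment :: "nat \<Rightarrow> (nat \<Rightarrow> nat) \<Rightarrow> bool" where
  "assignment n \<sigma> \<longleftrightarrow> bij_betw \<sigma> {1..n} {1..n}"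

definition welfare :: "(nat \<Rightarrow> real) \<Rightarrow> (nat \<Rightarrow> real) \<Rightarrow> nat set \<Rightarrow> (nat \<Rightarrow> nat) \<Rightarrow> real" where
  "welfare \<beta> v A \<sigma> = (\<Sum>i\<in>A. \<beta> (\<sigma> i) * v i)"

definition efficient :: "nat \<Rightarrow> (nat \<Rightarrow> real) \<Rightarrow> (nat \<Rightarrow> real) \<Rightarrow> (nat \<Rightarrow> nat) \<Rightarrow> bool" where
  "efficient n \<beta> v \<sigma> \<longleftrightarrow> assignment n \<sigma> \<and>
     (\<forall>\<pi>. assignment n \<pi> \<longrightarrow> welfare \<beta> v {1..n} \<pi> \<le> welfare \<beta> v {1..n} \<sigma>)"

definition opt_welfare :: "nat \<Rightarrow> (nat \<Rightarrow> real) \<Rightarrow> (nat \<Rightarrow> real) \<Rightarrow> nat set \<Rightarrow> real" where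
  "opt_welfare n \<beta> v A = Max {welfare \<beta> v A \<pi> | \<pi>. inj_on \<pi> A \<and> \<pi> ` A \<subseteq> {1..n}}"

definition vcg_assignment :: "nat \<Rightarrow> (nat \<Rightarrow> real) \<Rightarrow> (nat \<Rightarrow> real) \<Rightarrow> nat \<Rightarrow> nat" where
  "vcg_assignment n \<beta> v = (SOME \<sigma>. efficient n \<beta> v \<sigma>)"

definition clarke_payment :: "nat \<Rightarrow> (nat \<Rightarrow> real) \<Rightarrow> (nat \<Rightarrow> real) \<Rightarrow> nat \<Rightarrow> real" where
  "clarke_payment n \<beta> v i =
     opt_welfare n \<beta> v ({1..n} - {i}) - welfare \<beta> v ({1..n} - {i}) (vcg_assignment n \<beta> v)"

definition vcg_revenue :: "nat \<Rightarrow> (nat \<Rightarrow> real) \<Rightarrow> (nat \<Rightarrow> real) \<Rightarrow> real" where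
  "vcg_revenue n \<beta> v = (\<Sum>i\<in>{1..n}. clarke_payment n \<beta> v i)"

(* the m-th highest submitted value (m >= 1), 0 if there is none *)
definition nth_highest :: "nat \<Rightarrow> (nat \<Rightarrow> real) \<Rightarrow> nat \<Rightarrow> real" where
  "nth_highest n b m = (if 1 \<le> m \<and> m \<le> n then rev (sort (map b [1..<n+1])) ! (m - 1) else 0)"

(* A 1-GSP ranking rule: for every bid profile, a ranking of the agents consistent with the
   bids (ties broken arbitrarily). *)
definition gsp_rule :: "nat \<Rightarrow> ((nat \<Rightarrow> real) \<Rightarrow> nat \<Rightarrow> nat) \<Rightarrow> bool" where
  "gsp_rule n rank \<longleftrightarrow> (\<forall>b. assignment n (rank b) \<and>
      (\<forall>i\<in>{1..n}. \<forall>i'\<in>{1..n}. b i > b i' \<longrightarrow> rank b i < rank b i'))"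

definition gsp_payment :: "nat \<Rightarrow> nat \<Rightarrow> ((nat \<Rightarrow> real) \<Rightarrow> nat \<Rightarrow> nat) \<Rightarrow> (nat \<Rightarrow> real) \<Rightarrow> nat \<Rightarrow> real" where
  "gsp_payment n k rank b i = (if rank b i \<le> k then nth_highest n b (rank b i + 1) else 0)"

definition gsp_utility :: "nat \<Rightarrow> nat \<Rightarrow> ((nat \<Rightarrow> real) \<Rightarrow> nat \<Rightarrow> nat) \<Rightarrow> (nat \<Rightarrow> real) \<Rightarrow> (nat \<Rightarrow> real)
      \<Rightarrow> (nat \<Rightarrow> real) \<Rightarrow> nat \<Rightarrow> real" where
  "gsp_utility n k rank \<beta> v b i =
     (if rank b i \<le> k then \<beta> (rank b i) * v i else 0) - gsp_payment n k rank b i"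

definition gsp_revenue :: "nat \<Rightarrow> nat \<Rightarrow> ((nat \<Rightarrow> real) \<Rightarrow> nat \<Rightarrow> nat) \<Rightarrow> (nat \<Rightarrow> real) \<Rightarrow> real" where
  "gsp_revenue n k rank b = (\<Sum>i\<in>{1..n}. gsp_payment n k rank b i)"

definition gsp_nash :: "nat \<Rightarrow> nat \<Rightarrow> ((nat \<Rightarrow> real) \<Rightarrow> nat \<Rightarrow> nat) \<Rightarrow> (nat \<Rightarrow> real) \<Rightarrow> (nat \<Rightarrow> real)
      \<Rightarrow> (nat \<Rightarrow> real) \<Rightarrow> bool" where
  "gsp_nash n k rank \<beta> v b \<longleftrightarrow> (\<forall>i\<in>{1..n}. b i \<ge> 0) \<and>
     (\<forall>i\<in>{1..n}. \<forall>x\<ge>0. gsp_utility n k rank \<beta> v (b(i := x)) i \<le> gsp_utility n k rank \<beta> v b i)"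

end

theory Submission
  imports Defs "HOL-Library.Multiset" "HOL-Library.FuncSet"
begin

definition consis :: "nat \<Rightarrow> (nat \<Rightarrow> real) \<Rightarrow> (nat \<Rightarrow> nat) \<Rightarrow> bool" where
  "consis n b \<rho> \<longleftrightarrow> bij_betw \<rho> {1..n} {1..n} \<and>
     (\<forall>i\<in>{1..n}. \<forall>i'\<in>{1..n}. b i > b i' \<longrightarrow> \<rho> i < \<rho> i')"

lemma gsp_consis: "gsp_rule n rank \<Longrightarrow> consis n b (rank b)"
  unfolding gsp_rule_def consis_def assignment_def by blast

lemma consis_inv:
  assumes "consis n b \<rho>" "t \<in> {1..n}"
  shows "inv_into {1..n} \<rho> t \<in> {1..n}" "\<rho> (inv_into {1..n} \<rho> t) = t"
proof -
  have "bij_betw \<rho> {1..n} {1..n}" using assms(1) unfolding consis_def by blast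
  then show "inv_into {1..n} \<rho> t \<in> {1..n}" "\<rho> (inv_into {1..n} \<rho> t) = t"
    using assms(2) by (metis bij_betw_apply bij_betw_inv_into) (meson assms(2) bij_betw_inv_into_right \<open>bij_betw \<rho> {1..n} {1..n}\<close>)
qed

lemma consis_ge:
  assumes "consis n b \<rho>" "c \<in> {1..n}" "d \<in> {1..n}" "\<rho> c \<le> \<rho> d"
  shows "b d \<le> b c"
  using assms unfolding consis_def by (meson leD not_le)

lemma nth_eq:
  assumes "consis n b \<rho>" "1 \<le> m" "m \<le> n"
  shows "nth_highest n b m = b (inv_into {1..n} \<rho> m)"
proof -
  define \<tau> where "\<tau> = inv_into {1..n} \<rho>"
  define L where "L = map (\<lambda>t. b (\<tau> t)) [1..<n+1]"
  have bij: "bij_betw \<tau> {1..n} {1..n}" unfolding \<tau>_def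
    using assms(1) unfolding consis_def by (simp add: bij_betw_inv_into)
  have su: "set [1..<n+1] = {1..n}" by auto
  have d: "distinct (map \<tau> [1..<n+1])"
    using bij su by (simp only: distinct_map bij_betw_def) simp
  have s: "set (map \<tau> [1..<n+1]) = {1..n}"
    using bij su by (simp only: set_map bij_betw_def)
  have ms: "mset (map \<tau> [1..<n+1]) = mset [1..<n+1]"
    by (metis d s mset_set_set distinct_upt set_upt atLeastLessThanSuc_atLeastAtMost Suc_eq_plus1)
  have m1: "mset (rev L) = mset (map b [1..<n+1])"
  proof -
    have "L = map b (map \<tau> [1..<n+1])" by (simp add: L_def)
    hence "mset L = image_mset b (mset (map \<tau> [1..<n+1]))" by (simp only: mset_map)
    also have "\<dots> = image_mset b (mset [1..<n+1])" using ms by simp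
    also have "\<dots> = mset (map b [1..<n+1])" by (simp only: mset_map)
    finally show ?thesis by simp
  qed
  have srt: "sorted (rev L)"
    unfolding sorted_rev_iff_nth_mono
  proof (intro allI impI)
    fix i j assume ij: "i \<le> j" "j < length L"
    have lL: "length L = n" by (simp add: L_def)
    have i1: "i+1 \<in> {1..n}" "j+1 \<in> {1..n}" using ij lL by auto
    have "L ! i = b (\<tau> (i+1))" "L ! j = b (\<tau> (j+1))" using ij lL by (auto simp del: upt_Suc simp: L_def)
    moreover have "b (\<tau> (j+1)) \<le> b (\<tau> (i+1))"
      using consis_ge[OF assms(1), of "\<tau> (i+1)" "\<tau> (j+1)"] consis_inv[OF assms(1)] i1 ij
      unfolding \<tau>_def by auto
    ultimately show "L ! j \<le> L ! i" by simp
  qed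
  have "sort (map b [1..<n+1]) = rev L" using properties_for_sort[OF m1 srt] .
  hence 1: "nth_highest n b m = L ! (m - 1)" using assms by (simp add: nth_highest_def)
  have "[1..<n+1] ! (m-1) = m" using assms by (subst nth_upt) auto
  hence "L ! (m - 1) = b (\<tau> m)" using assms by (simp del: upt_Suc add: L_def)
  with 1 show ?thesis by (simp add: \<tau>_def)
qed

lemma beta_lt_k:
  assumes "beta_ok n k \<beta>" "1 \<le> s" "s < t" "t \<le> k"
  shows "\<beta> t < \<beta> s"
  using assms(3,4)
proof (induction t)
  case 0 then show ?case by simp
next
  case (Suc t)
  have step: "\<beta> (t+1) < \<beta> t" using assms(1,2) Suc.prems unfolding beta_ok_def by auto
  show ?case
  proof (cases "s = t")
    case True then show ?thesis using step by simp
  next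
    case False then have "\<beta> t < \<beta> s" using Suc by auto
    then show ?thesis using step by simp
  qed
qed

lemma beta_pos:
  assumes "beta_ok n k \<beta>" "1 \<le> s" "s \<le> k"
  shows "\<beta> s > 0"
proof (cases "s = k")
  case True then show ?thesis using assms unfolding beta_ok_def by simp
next
  case False
  then have "\<beta> k < \<beta> s" using beta_lt_k[OF assms(1,2)] assms by simp
  then show ?thesis using assms unfolding beta_ok_def by simp
qed

lemma beta_zero: "beta_ok n k \<beta> \<Longrightarrow> k < s \<Longrightarrow> \<beta> s = 0"
  unfolding beta_ok_def by simp

lemma beta_lt:
  assumes "beta_ok n k \<beta>" "1 \<le> s" "s < t" "s \<le> k"
  shows "\<beta> t < \<beta> s"
proof (cases "t \<le> k")
  case True then show ?thesis using beta_lt_k[OF assms(1-3)] by simp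
next
  case False then show ?thesis using beta_zero[OF assms(1)] beta_pos[OF assms(1,2,4)] by simp
qed

lemma beta_nonneg: "beta_ok n k \<beta> \<Longrightarrow> 1 \<le> s \<Longrightarrow> \<beta> s \<ge> 0"
  by (metis beta_pos beta_zero less_le not_le order_refl)

lemma beta_le:
  assumes "beta_ok n k \<beta>" "1 \<le> s" "s \<le> t"
  shows "\<beta> t \<le> \<beta> s"
proof (cases "s = t")
  case True then show ?thesis by simp
next
  case False
  show ?thesis
  proof (cases "s \<le> k")
    case True
    have "s < t" using False assms(3) by simp
    then show ?thesis using beta_lt[OF assms(1,2) _ True] by (simp add: less_imp_le)
  next
    case F: False then show ?thesis using beta_zero[OF assms(1)] assms by simp
  qed
qed

lemma v_anti:
  fixes v :: "nat \<Rightarrow> real" and a c n :: nat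
  assumes "\<forall>i. 1 \<le> i \<and> i < n \<longrightarrow> v (i+1) \<le> (v i :: real)" "1 \<le> a" "a \<le> c" "c \<le> n"
  shows "v c \<le> v a"
proof -
  have "\<forall>c. a \<le> c \<longrightarrow> c \<le> n \<longrightarrow> v c \<le> v a"
  proof
    fix c show "a \<le> c \<longrightarrow> c \<le> n \<longrightarrow> v c \<le> v a"
    proof (induction c)
      case 0 then show ?case using assms(2) by simp
    next
      case (Suc c)
      show ?case
      proof (intro impI)
        assume h: "a \<le> Suc c" "Suc c \<le> n"
        show "v (Suc c) \<le> v a"
        proof (cases "a = Suc c")
          case True then show ?thesis by simp
        next
          case False
          then have "v c \<le> v a" using Suc h by simp
          moreover have "v (c+1) \<le> v c" using assms(1,2) h False by auto
          ultimately show ?thesis by simp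
        qed
      qed
    qed
  qed
  then show ?thesis using assms(3,4) by blast
qed

lemma card_lt:
  assumes "bij_betw \<rho> {1..n} {1..(n::nat)}" "1 \<le> r" "r \<le> n+1"
  shows "card {c\<in>{1..n}. \<rho> c < r} = r - 1"
proof -
  have inj: "inj_on \<rho> {c\<in>{1..n}. \<rho> c < r}" using assms(1) unfolding bij_betw_def
    by (auto intro: inj_on_subset)
  have "\<rho> ` {c\<in>{1..n}. \<rho> c < r} = {t\<in>\<rho> ` {1..n}. t < r}"
    by blast
  also have "\<dots> = {t\<in>{1..n}. t < r}"
    using assms(1) unfolding bij_betw_def by simp
  also have "\<dots> = {1..<r}" using assms by auto
  finally show ?thesis using card_image[OF inj] by simp
qed

lemma card_le:
  assumes "bij_betw \<rho> {1..n} {1..(n::nat)}" "r \<le> n"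
  shows "card {c\<in>{1..n}. \<rho> c \<le> r} = r"
proof -
  have inj: "inj_on \<rho> {c\<in>{1..n}. \<rho> c \<le> r}" using assms(1) unfolding bij_betw_def
    by (auto intro: inj_on_subset)
  have "\<rho> ` {c\<in>{1..n}. \<rho> c \<le> r} = {t\<in>\<rho> ` {1..n}. t \<le> r}"
    by blast
  also have "\<dots> = {t\<in>{1..n}. t \<le> r}"
    using assms(1) unfolding bij_betw_def by simp
  also have "\<dots> = {1..r}" using assms by auto
  finally show ?thesis using card_image[OF inj] by simp
qed

lemma nth_nonneg:
  assumes "gsp_rule n rank" "\<forall>i\<in>{1..n}. b i \<ge> 0"
  shows "nth_highest n b m \<ge> 0"
proof (cases "1 \<le> m \<and> m \<le> n")
  case True
  have cs: "consis n b (rank b)" using gsp_consis[OF assms(1)] .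
  show ?thesis using nth_eq[OF cs] True consis_inv(1)[OF cs, of m] assms(2) by auto
next
  case False then show ?thesis unfolding nth_highest_def by (subst if_not_P) auto
qed

lemma deviation:
  assumes rule: "gsp_rule n rank" and nash: "gsp_nash n k rank \<beta> v b" and bo: "beta_ok n k \<beta>"
    and vnn: "\<forall>i\<in>{1..n}. v i \<ge> 0" and a: "a \<in> {1..n}" and m: "1 \<le> m" "m \<le> k" "m < rank b a"
  shows "\<beta> m * v a - b (inv_into {1..n} (rank b) m) \<le> gsp_utility n k rank \<beta> v b a"
proof -
  define \<sigma> where "\<sigma> = rank b"
  define \<tau> where "\<tau> = inv_into {1..n} \<sigma>"
  define p where "p = b (\<tau> m)"
  have cs: "consis n b \<sigma>" unfolding \<sigma>_def using gsp_consis[OF rule] .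
  have sa: "\<sigma> a \<in> {1..n}" using cs a unfolding consis_def bij_betw_def by auto
  have mn: "m \<le> n" using m sa unfolding \<sigma>_def by auto
  have tm: "\<tau> m \<in> {1..n}" "\<sigma> (\<tau> m) = m" using consis_inv[OF cs, of m] mn m unfolding \<tau>_def by auto
  have bnn: "\<forall>i\<in>{1..n}. b i \<ge> 0" using nash unfolding gsp_nash_def by blast
  have p0: "p \<ge> 0" using bnn tm unfolding p_def by auto
  define G where "G = b ` {c\<in>{1..n}. b c > p}"
  have fG: "finite G" unfolding G_def by simp
  define x where "x = (if G = {} then p + 1 else (p + Min G) / 2)"
  have xp: "x > p"
  proof (cases "G = {}")
    case True then show ?thesis unfolding x_def by simp
  next
    case False
    have "Min G \<in> G" using Min_in[OF fG False] .
    then have "Min G > p" unfolding G_def by auto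
    then show ?thesis unfolding x_def using False by simp
  qed
  have xG: "\<And>c. c \<in> {1..n} \<Longrightarrow> b c > p \<Longrightarrow> x < b c"
  proof -
    fix c assume c: "c \<in> {1..n}" "b c > p"
    then have bG: "b c \<in> G" unfolding G_def by auto
    then have "G \<noteq> {}" by auto
    then have "x = (p + Min G)/2" unfolding x_def by simp
    moreover have "Min G \<le> b c" using Min_le[OF fG bG] .
    ultimately show "x < b c" using c by simp
  qed
  define b' where "b' = b(a := x)"
  define \<rho> where "\<rho> = rank b'"
  define r where "r = \<rho> a"
  have cs': "consis n b' \<rho>" unfolding \<rho>_def using gsp_consis[OF rule] .
  have bij': "bij_betw \<rho> {1..n} {1..n}" using cs' unfolding consis_def by blast
  have bij: "bij_betw \<sigma> {1..n} {1..n}" using cs unfolding consis_def by blast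
  have r1: "r \<in> {1..n}" using bij' a unfolding r_def bij_betw_def by auto
  have rm: "r \<le> m"
  proof -
    have sub: "{c\<in>{1..n}. \<rho> c < r} \<subseteq> {c\<in>{1..n}. \<sigma> c < m}"
    proof
      fix c assume c: "c \<in> {c\<in>{1..n}. \<rho> c < r}"
      then have ca: "c \<noteq> a" unfolding r_def by auto
      have "\<not> b' c < b' a"
      proof
        assume "b' c < b' a"
        then have "\<rho> a < \<rho> c" using cs' c a unfolding consis_def by blast
        then show False using c unfolding r_def by simp
      qed
      then have "b c \<ge> x" using ca unfolding b'_def by simp
      then have bcp: "b c > p" using xp by simp
      have "\<sigma> c < m"
      proof (rule ccontr)
        assume "\<not> \<sigma> c < m"
        then have "\<sigma> (\<tau> m) \<le> \<sigma> c" using tm by simp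
        then have "b c \<le> b (\<tau> m)" using consis_ge[OF cs tm(1)] c by blast
        then show False using bcp unfolding p_def by simp
      qed
      then show "c \<in> {c\<in>{1..n}. \<sigma> c < m}" using c by simp
    qed
    have "card {c\<in>{1..n}. \<rho> c < r} \<le> card {c\<in>{1..n}. \<sigma> c < m}"
      by (rule card_mono[OF _ sub]) simp
    then have "r - 1 \<le> m - 1"
      using card_lt[OF bij', of r] card_lt[OF bij, of m] r1 m mn by simp
    then show ?thesis using r1 m by simp
  qed
  have pay: "nth_highest n b' (r+1) \<le> p"
  proof (cases "r + 1 \<le> n")
    case False then show ?thesis using p0 by (simp add: nth_highest_def)
  next
    case True
    define \<tau>' where "\<tau>' = inv_into {1..n} \<rho>"
    have t': "\<tau>' (r+1) \<in> {1..n}" "\<rho> (\<tau>' (r+1)) = r+1"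
      using consis_inv[OF cs', of "r+1"] True unfolding \<tau>'_def by auto
    have eq: "nth_highest n b' (r+1) = b' (\<tau>' (r+1))"
      using nth_eq[OF cs', of "r+1"] True unfolding \<tau>'_def by simp
    show ?thesis
    proof (rule ccontr)
      assume "\<not> nth_highest n b' (r+1) \<le> p"
      then have zp: "b' (\<tau>' (r+1)) > p" using eq by simp
      have sub: "{c\<in>{1..n}. \<rho> c \<le> r+1} \<subseteq> {c\<in>{1..n}. \<rho> c \<le> r}"
      proof
        fix c assume c: "c \<in> {c\<in>{1..n}. \<rho> c \<le> r+1}"
        have "b' (\<tau>' (r+1)) \<le> b' c" using consis_ge[OF cs', of c "\<tau>' (r+1)"] c t' by simp
        then have bc: "b' c > p" using zp by simp
        show "c \<in> {c\<in>{1..n}. \<rho> c \<le> r}"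
        proof (cases "c = a")
          case True then show ?thesis using c unfolding r_def by simp
        next
          case False
          then have "b c > p" using bc unfolding b'_def by simp
          then have "x < b c" using xG c by simp
          then have "b' a < b' c" using False unfolding b'_def by simp
          then have "\<rho> c < \<rho> a" using cs' c a unfolding consis_def by blast
          then show ?thesis using c unfolding r_def by simp
        qed
      qed
      have "card {c\<in>{1..n}. \<rho> c \<le> r+1} \<le> card {c\<in>{1..n}. \<rho> c \<le> r}"
        by (rule card_mono[OF _ sub]) simp
      then show False using card_le[OF bij', of "r+1"] card_le[OF bij', of r] True by simp
    qed
  qed
  have rk: "r \<le> k" using rm m by simp
  have "gsp_utility n k rank \<beta> v b' a = \<beta> r * v a - nth_highest n b' (r+1)"
    using rk unfolding gsp_utility_def gsp_payment_def r_def \<rho>_def by simp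
  moreover have "\<beta> m * v a \<le> \<beta> r * v a"
    using beta_le[OF bo, of r m] r1 rm vnn a by (simp add: mult_right_mono)
  moreover have "gsp_utility n k rank \<beta> v b' a \<le> gsp_utility n k rank \<beta> v b a"
    using nash a xp p0 unfolding gsp_nash_def b'_def by auto
  ultimately show ?thesis using pay unfolding p_def \<tau>_def \<sigma>_def by linarith
qed

lemma sum2:
  assumes "finite A" "a \<in> A" "c \<in> A" "a \<noteq> c"
  shows "sum f A = f a + f c + sum f (A - {a} - {c})"
proof -
  have "sum f A = f a + sum f (A - {a})" using sum.remove[OF assms(1,2)] .
  also have "sum f (A - {a}) = f c + sum f (A - {a} - {c})"
    using sum.remove[of "A - {a}" c f] assms by simp
  finally show ?thesis by (simp only: add.assoc)
qed

lemma swap_eff: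
  assumes eff: "efficient n \<beta> v \<sigma>" and bo: "beta_ok n k \<beta>"
    and a: "a \<in> {1..n}" and c: "c \<in> {1..n}" and lt: "\<sigma> a < \<sigma> c" and ak: "\<sigma> a \<le> k"
  shows "v c \<le> v a"
proof -
  define A where "A = {1..n}"
  define g where "g = (\<lambda>x. if x = a then c else if x = c then a else x)"
  have ac: "a \<noteq> c" using lt by auto
  have bij: "bij_betw \<sigma> A A" using eff unfolding efficient_def assignment_def A_def by blast
  have bg: "bij_betw g A A"
    by (rule bij_betw_byWitness[of A g g]) (use a c in \<open>auto simp: g_def A_def\<close>)
  have bp: "bij_betw (\<sigma> \<circ> g) A A" using bij_betw_trans[OF bg bij] .
  then have "welfare \<beta> v A (\<sigma> \<circ> g) \<le> welfare \<beta> v A \<sigma>"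
    using eff unfolding efficient_def assignment_def A_def by blast
  moreover have "welfare \<beta> v A (\<sigma> \<circ> g) = \<beta> (\<sigma> c) * v a + \<beta> (\<sigma> a) * v c
      + (\<Sum>i\<in>A-{a}-{c}. \<beta> (\<sigma> i) * v i)"
  proof -
    have "welfare \<beta> v A (\<sigma> \<circ> g) = \<beta> (\<sigma> (g a)) * v a + \<beta> (\<sigma> (g c)) * v c
      + (\<Sum>i\<in>A-{a}-{c}. \<beta> (\<sigma> (g i)) * v i)"
      unfolding welfare_def using sum2[of A a c] a c ac by (simp add: A_def)
    also have "(\<Sum>i\<in>A-{a}-{c}. \<beta> (\<sigma> (g i)) * v i) = (\<Sum>i\<in>A-{a}-{c}. \<beta> (\<sigma> i) * v i)"
      by (rule sum.cong) (auto simp: g_def)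
    finally show ?thesis using ac by (simp add: g_def comp_def)
  qed
  moreover have "welfare \<beta> v A \<sigma> = \<beta> (\<sigma> a) * v a + \<beta> (\<sigma> c) * v c
      + (\<Sum>i\<in>A-{a}-{c}. \<beta> (\<sigma> i) * v i)"
    unfolding welfare_def using sum2[of A a c] a c ac by (simp add: A_def)
  ultimately have ineq: "(\<beta> (\<sigma> a) - \<beta> (\<sigma> c)) * (v c - v a) \<le> 0"
    by (simp add: algebra_simps)
  have sa1: "1 \<le> \<sigma> a" using bij a unfolding bij_betw_def A_def by auto
  have "\<beta> (\<sigma> c) < \<beta> (\<sigma> a)" using beta_lt[OF bo sa1 lt ak] .
  show ?thesis
  proof (rule ccontr)
    assume "\<not> v c \<le> v a"
    then have "0 < (\<beta> (\<sigma> a) - \<beta> (\<sigma> c)) * (v c - v a)"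
      using \<open>\<beta> (\<sigma> c) < \<beta> (\<sigma> a)\<close> by (intro mult_pos_pos) auto
    then show False using ineq by simp
  qed
qed

lemma pigeon:
  assumes "bij_betw \<sigma> {1..n} {1..n}" "1 \<le> t" "t \<le> (n::nat)"
  shows "\<exists>a\<in>{1..t}. \<sigma> a \<ge> t"
proof (rule ccontr)
  assume "\<not> ?thesis"
  then have "\<sigma> ` {1..t} \<subseteq> {1..<t}" using assms unfolding bij_betw_def by force
  moreover have "inj_on \<sigma> {1..t}" using assms unfolding bij_betw_def
    by (auto intro: inj_on_subset)
  ultimately have "card {1..t} \<le> card {1..<t}" using card_inj_on_le[of \<sigma> "{1..t}" "{1..<t}"] by simp
  then show False using assms by simp
qed

lemma value_rank:
  assumes eff: "efficient n \<beta> v \<sigma>" and bo: "beta_ok n k \<beta>"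
    and va: "\<forall>i. 1 \<le> i \<and> i < n \<longrightarrow> v (i+1) \<le> v i"
    and t: "1 \<le> t" "t \<le> n" "t \<le> k"
  shows "v t \<le> v (inv_into {1..n} \<sigma> t)"
proof -
  have bij: "bij_betw \<sigma> {1..n} {1..n}" using eff unfolding efficient_def assignment_def by blast
  obtain a where a: "a \<in> {1..t}" "\<sigma> a \<ge> t" using pigeon[OF bij t(1,2)] by blast
  define d where "d = inv_into {1..n} \<sigma> t"
  have tn: "t \<in> {1..n}" using t by simp
  have d: "d \<in> {1..n}" "\<sigma> d = t" unfolding d_def
    using bij_betw_apply[OF bij_betw_inv_into[OF bij] tn] bij_betw_inv_into_right[OF bij tn] by auto
  have an: "a \<in> {1..n}" using a t by auto
  have "v t \<le> v a" using v_anti[OF va, of a t] a t by auto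
  moreover have "v a \<le> v d"
  proof (cases "\<sigma> a = t")
    case True
    have "inj_on \<sigma> {1..n}" using bij unfolding bij_betw_def by blast
    then have "a = d" using inj_onD[of \<sigma> "{1..n}" a d] True an d by simp
    then show ?thesis by simp
  next
    case False
    then show ?thesis using swap_eff[OF eff bo d(1) an] d a t by simp
  qed
  ultimately show ?thesis unfolding d_def by simp
qed

lemma pair_bound:
  fixes P D :: "nat \<Rightarrow> real"
  assumes P0: "\<forall>j. P j \<ge> 0"
    and step: "\<forall>i. 1 \<le> i \<and> i \<le> k \<longrightarrow> D (i+1) + P (i+2) \<le> P i"
  shows "1 \<le> j \<Longrightarrow> (\<Sum>l=j+1..k. D l) \<le> P j + P (j+1)"
proof (induction "k - j" arbitrary: j)
  case 0
  then have "{j+1..k} = {}" by auto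
  then show ?case using P0 by (simp add: add_nonneg_nonneg)
next
  case (Suc m)
  then have jk: "j < k" by simp
  have IH: "(\<Sum>l=j+2..k. D l) \<le> P (j+1) + P (j+2)" using Suc.hyps(1)[of "j+1"] Suc.hyps(2) Suc.prems
    by (simp add: add.commute)
  have "(\<Sum>l=j+1..k. D l) = D (j+1) + (\<Sum>l=j+2..k. D l)"
    using jk by (simp add: sum.atLeast_Suc_atMost)
  moreover have "D (j+1) + P (j+2) \<le> P j" using step Suc.prems jk by simp
  ultimately show ?case using IH by simp
qed

lemma double_sum:
  fixes D :: "nat \<Rightarrow> real"
  shows "(\<Sum>j=1..k. \<Sum>l=j+1..k. D l) = (\<Sum>l=1..k. (real l - 1) * D l)"
proof (induction k)
  case 0 then show ?case by simp
next
  case (Suc k)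
  have "(\<Sum>j=1..Suc k. \<Sum>l=j+1..Suc k. D l) = (\<Sum>j=1..k. \<Sum>l=j+1..Suc k. D l)"
    by simp
  also have "\<dots> = (\<Sum>j=1..k. (\<Sum>l=j+1..k. D l) + D (Suc k))"
    by (rule sum.cong) auto
  also have "\<dots> = (\<Sum>j=1..k. \<Sum>l=j+1..k. D l) + real k * D (Suc k)"
    by (simp add: sum.distrib)
  finally show ?case using Suc by (simp add: algebra_simps)
qed

lemma shift_sum:
  fixes P :: "nat \<Rightarrow> real"
  shows "(\<Sum>j=1..k. P (j+1)) + P 1 = (\<Sum>j=1..k+1. P j)"
  by (induction k) auto

lemma chain_sum:
  fixes P D :: "nat \<Rightarrow> real"
  assumes P0: "\<forall>j. P j \<ge> 0" and Pk: "\<forall>j>k. P j = 0"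
    and step: "\<forall>i. 1 \<le> i \<and> i \<le> k \<longrightarrow> D (i+1) + P (i+2) \<le> P i"
  shows "(\<Sum>l=1..k. (real l - 1) * D l) \<le> 2 * (\<Sum>j=1..k. P j)"
proof -
  have "(\<Sum>l=1..k. (real l - 1) * D l) = (\<Sum>j=1..k. \<Sum>l=j+1..k. D l)" using double_sum by simp
  also have "\<dots> \<le> (\<Sum>j=1..k. P j + P (j+1))"
    by (rule sum_mono) (use pair_bound[OF P0 step] in auto)
  also have "\<dots> = (\<Sum>j=1..k. P j) + (\<Sum>j=1..k. P (j+1))" by (simp add: sum.distrib)
  also have "(\<Sum>j=1..k. P (j+1)) \<le> (\<Sum>j=1..k. P j)"
  proof -
    have "(\<Sum>j=1..k+1. P j) = (\<Sum>j=1..k. P j)" using Pk by simp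
    then show ?thesis using shift_sum[of P k] P0 by smt
  qed
  finally show ?thesis by simp
qed

lemma chain_step:
  fixes n k :: nat and \<beta> v b :: "nat \<Rightarrow> real" and rank :: "(nat \<Rightarrow> real) \<Rightarrow> nat \<Rightarrow> nat"
  assumes bo: "beta_ok n k \<beta>"
    and vnn: "\<forall>i\<in>{1..n}. v i \<ge> 0"
    and va: "\<forall>i. 1 \<le> i \<and> i < n \<longrightarrow> v (i+1) \<le> v i"
    and rule: "gsp_rule n rank"
    and nash: "gsp_nash n k rank \<beta> v b"
    and eff: "efficient n \<beta> v (rank b)"
    and P_def: "P = (\<lambda>j. if j \<le> k then nth_highest n b (j+1) else 0)"
    and i: "1 \<le> i" "i \<le> k"
  shows "(\<beta> (i+1) - \<beta> (i+2)) * (if i+2 \<le> n then v (i+2) else 0) + P (i+2) \<le> P i"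
proof -
  define \<sigma> where "\<sigma> = rank b"
  define \<tau> where "\<tau> = inv_into {1..n} \<sigma>"
  have cs: "consis n b \<sigma>" unfolding \<sigma>_def using gsp_consis[OF rule] .
  have bij: "bij_betw \<sigma> {1..n} {1..n}" using cs unfolding consis_def by blast
  have bnn: "\<forall>i\<in>{1..n}. b i \<ge> 0" using nash unfolding gsp_nash_def by blast
  have kn: "k \<le> n" using bo unfolding beta_ok_def by simp
  have Pi: "P i = nth_highest n b (i+1)" using i unfolding P_def by simp
  show ?thesis
  proof (cases "i + 2 \<le> k")
    case True
    have tn: "i+2 \<in> {1..n}" using True kn by simp
    define a where "a = \<tau> (i+2)"
    have a: "a \<in> {1..n}" "\<sigma> a = i+2" using consis_inv[OF cs tn] unfolding a_def \<tau>_def by auto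
    have dev: "\<beta> (i+1) * v a - b (\<tau> (i+1)) \<le> gsp_utility n k rank \<beta> v b a"
      using deviation[OF rule nash bo vnn a(1), of "i+1"] a True unfolding \<sigma>_def \<tau>_def by simp
    have u: "gsp_utility n k rank \<beta> v b a = \<beta> (i+2) * v a - nth_highest n b (i+3)"
      using a True unfolding gsp_utility_def gsp_payment_def \<sigma>_def by (simp add: numeral_3_eq_3)
    have nb: "nth_highest n b (i+1) = b (\<tau> (i+1))" using nth_eq[OF cs, of "i+1"] tn unfolding \<tau>_def by simp
    have vv: "v (i+2) \<le> v a" using value_rank[OF _ bo va, of \<sigma> "i+2"] eff tn True
      unfolding a_def \<tau>_def \<sigma>_def by simp
    have dpos: "\<beta> (i+2) \<le> \<beta> (i+1)" using beta_le[OF bo, of "i+1" "i+2"] by simp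
    have "(\<beta> (i+1) - \<beta> (i+2)) * v (i+2) \<le> (\<beta> (i+1) - \<beta> (i+2)) * v a"
      using dpos vv by (simp add: mult_left_mono)
    moreover have "P (i+2) = nth_highest n b (i+3)" using True unfolding P_def by (simp add: numeral_3_eq_3)
    ultimately show ?thesis using dev u nb Pi tn by (simp add: algebra_simps)
  next
    case False
    show ?thesis
    proof (cases "i + 2 = k + 1 \<and> k + 1 \<le> n")
      case True
      obtain a where a: "a \<in> {1..k+1}" "\<sigma> a \<ge> k+1" using pigeon[OF bij, of "k+1"] True by auto
      have an: "a \<in> {1..n}" using a True by auto
      have dev: "\<beta> k * v a - b (\<tau> k) \<le> gsp_utility n k rank \<beta> v b a"
        using deviation[OF rule nash bo vnn an, of k] a True unfolding \<sigma>_def \<tau>_def by simp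
      have u: "gsp_utility n k rank \<beta> v b a = 0"
        using a unfolding gsp_utility_def gsp_payment_def \<sigma>_def by simp
      have nb: "nth_highest n b k = b (\<tau> k)" using nth_eq[OF cs, of k] True kn unfolding \<tau>_def by simp
      have vv: "v (k+1) \<le> v a" using v_anti[OF va, of a "k+1"] a True by simp
      have bk: "\<beta> k > 0" using beta_pos[OF bo, of k] True by simp
      have b1: "\<beta> (k+1) = 0" using beta_zero[OF bo] by simp
      have "\<beta> k * v (k+1) \<le> \<beta> k * v a" using bk vv by simp
      moreover have "P (i+2) = 0" using True unfolding P_def by simp
      moreover have "P i = nth_highest n b k" using Pi True by simp
      ultimately show ?thesis using dev u nb True b1 by simp
    next
      case F2: False
      have "(\<beta> (i+1) - \<beta> (i+2)) * (if i+2 \<le> n then v (i+2) else 0) = 0"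
      proof (cases "i = k")
        case True then show ?thesis using beta_zero[OF bo, of "i+1"] beta_zero[OF bo, of "i+2"] by simp
      next
        case False
        then have "i + 2 = k + 1" using i \<open>\<not> i + 2 \<le> k\<close> by simp
        then have "\<not> i + 2 \<le> n" using F2 by simp
        then show ?thesis by simp
      qed
      moreover have "P (i+2) = 0" using False unfolding P_def by simp
      moreover have "P i \<ge> 0" using Pi nth_nonneg[OF rule bnn] by simp
      ultimately show ?thesis by linarith
    qed
  qed
qed

lemma sum_if_le:
  fixes f :: "nat \<Rightarrow> real"
  assumes "l \<le> n"
  shows "(\<Sum>c\<in>{1..n}. if c \<le> l then f c else 0) = (\<Sum>c=1..l. f c)"
proof -
  have "(\<Sum>c\<in>{1..n}. if c \<le> l then f c else 0) = (\<Sum>c\<in>{1..n} \<inter> {c. c \<le> l}. f c)"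
    by (simp add: sum.inter_restrict)
  also have "{1..n} \<inter> {c. c \<le> l} = {1..l}" using assms by auto
  finally show ?thesis .
qed

lemma telescope:
  fixes \<beta> :: "nat \<Rightarrow> real"
  shows "t \<le> k + 1 \<Longrightarrow> (\<Sum>l=t..k. \<beta> l - \<beta> (l+1)) = \<beta> t - \<beta> (k+1)"
proof (induction k)
  case 0 then show ?case by (cases t) auto
next
  case (Suc k)
  show ?case
  proof (cases "t = Suc k + 1")
    case True then show ?thesis by simp
  next
    case False
    then have "t \<le> k + 1" using Suc.prems by simp
    then show ?thesis using Suc.IH by (simp add: sum.atLeast_Suc_atMost_Suc_shift)
  qed
qed

lemma beta_decomp:
  assumes bo: "beta_ok n k \<beta>" and t: "1 \<le> t"
  shows "\<beta> t = (\<Sum>l=1..k. if t \<le> l then \<beta> l - \<beta> (l+1) else 0)"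
proof -
  have "(\<Sum>l=1..k. if t \<le> l then \<beta> l - \<beta> (l+1) else 0) = (\<Sum>l\<in>{1..k} \<inter> {l. t \<le> l}. \<beta> l - \<beta> (l+1))"
    by (subst sum.inter_restrict) auto
  also have "{1..k} \<inter> {l. t \<le> l} = {t..k}" using t by auto
  finally have e: "(\<Sum>l=1..k. if t \<le> l then \<beta> l - \<beta> (l+1) else 0) = (\<Sum>l=t..k. \<beta> l - \<beta> (l+1))" .
  show ?thesis
  proof (cases "t \<le> k")
    case True then show ?thesis using e telescope[of t k \<beta>] beta_zero[OF bo, of "k+1"] by simp
  next
    case False then show ?thesis using e beta_zero[OF bo, of t] by simp
  qed
qed

lemma welfare_decomp:
  assumes bo: "beta_ok n k \<beta>" and S: "finite S" and p: "\<forall>c\<in>S. 1 \<le> \<pi> c"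
  shows "welfare \<beta> v S \<pi> = (\<Sum>l=1..k. (\<beta> l - \<beta> (l+1)) * (\<Sum>c\<in>{c\<in>S. \<pi> c \<le> l}. v c))"
proof -
  have "welfare \<beta> v S \<pi> = (\<Sum>c\<in>S. \<Sum>l=1..k. if \<pi> c \<le> l then (\<beta> l - \<beta> (l+1)) * v c else 0)"
    unfolding welfare_def
  proof (rule sum.cong)
    fix c assume "c \<in> S"
    then have "\<beta> (\<pi> c) = (\<Sum>l=1..k. if \<pi> c \<le> l then \<beta> l - \<beta> (l+1) else 0)"
      using beta_decomp[OF bo] p by simp
    then show "\<beta> (\<pi> c) * v c = (\<Sum>l=1..k. if \<pi> c \<le> l then (\<beta> l - \<beta> (l+1)) * v c else 0)"
      by (simp add: sum_distrib_right) (rule sum.cong, auto)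
  qed simp
  also have "\<dots> = (\<Sum>l=1..k. \<Sum>c\<in>S. if \<pi> c \<le> l then (\<beta> l - \<beta> (l+1)) * v c else 0)"
    by (rule sum.swap)
  also have "\<dots> = (\<Sum>l=1..k. (\<beta> l - \<beta> (l+1)) * (\<Sum>c\<in>{c\<in>S. \<pi> c \<le> l}. v c))"
    by (rule sum.cong) (auto simp: sum_distrib_left sum.inter_filter[OF S, symmetric])
  finally show ?thesis .
qed

lemma subset_bound:
  fixes v :: "nat \<Rightarrow> real"
  assumes vnn: "\<forall>i\<in>{1..n}. v i \<ge> 0"
    and va: "\<forall>i. 1 \<le> i \<and> i < n \<longrightarrow> v (i+1) \<le> v i"
    and i: "i \<in> {1..n}" and S: "S \<subseteq> {1..n} - {i}" and cS: "card S \<le> l" and l: "l \<le> n"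
  defines "W \<equiv> (if l + 1 \<le> n then v (l+1) else 0)"
  shows "(\<Sum>c\<in>S. v c) \<le> real l * W + (\<Sum>c=1..l. v c - W) - (if i \<le> l then v i - W else 0)"
proof -
  define g where "g c = max 0 (v c - W)" for c
  have W0: "W \<ge> 0" unfolding W_def using vnn by auto
  have fS: "finite S" using S finite_subset by blast
  have "(\<Sum>c\<in>S. v c) \<le> (\<Sum>c\<in>S. W + g c)" by (rule sum_mono) (simp add: g_def)
  also have "\<dots> = real (card S) * W + (\<Sum>c\<in>S. g c)" by (simp add: sum.distrib)
  also have "\<dots> \<le> real l * W + (\<Sum>c\<in>{1..n} - {i}. g c)"
  proof -
    have "real (card S) * W \<le> real l * W" using cS W0 by (simp add: mult_right_mono)
    moreover have "(\<Sum>c\<in>S. g c) \<le> (\<Sum>c\<in>{1..n} - {i}. g c)"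
      by (rule sum_mono2) (use S in \<open>auto simp: g_def\<close>)
    ultimately show ?thesis by simp
  qed
  also have "(\<Sum>c\<in>{1..n} - {i}. g c) = (\<Sum>c\<in>{1..n}. g c) - g i"
    using i by (simp add: sum_diff1)
  also have "(\<Sum>c\<in>{1..n}. g c) = (\<Sum>c\<in>{1..n}. if c \<le> l then v c - W else 0)"
  proof (rule sum.cong)
    fix c assume c: "c \<in> {1..n}"
    show "g c = (if c \<le> l then v c - W else 0)"
    proof (cases "c \<le> l")
      case True
      have "W \<le> v c"
      proof (cases "l + 1 \<le> n")
        case True then show ?thesis unfolding W_def using v_anti[OF va, of c "l+1"] c \<open>c \<le> l\<close> by simp
      next
        case False then show ?thesis unfolding W_def using vnn c by simp
      qed
      then show ?thesis using True by (simp add: g_def)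
    next
      case False
      then have "v c \<le> W" unfolding W_def using v_anti[OF va, of "l+1" c] c by simp
      then show ?thesis using False by (simp add: g_def)
    qed
  qed simp
  also have "\<dots> = (\<Sum>c=1..l. v c - W)" using sum_if_le[OF l] .
  also have "g i = (if i \<le> l then v i - W else 0)"
  proof (cases "i \<le> l")
    case True
    have "W \<le> v i"
    proof (cases "l + 1 \<le> n")
      case True then show ?thesis unfolding W_def using v_anti[OF va, of i "l+1"] i \<open>i \<le> l\<close> by simp
    next
      case False then show ?thesis unfolding W_def using vnn i by simp
    qed
    then show ?thesis using True by (simp add: g_def)
  next
    case False
    then have "v i \<le> W" unfolding W_def using v_anti[OF va, of "l+1" i] i by simp
    then show ?thesis using False by (simp add: g_def)
  qed
  finally show ?thesis by simp
qed

lemma opt_bound: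
  fixes v :: "nat \<Rightarrow> real"
  assumes bo: "beta_ok n k \<beta>" and vnn: "\<forall>i\<in>{1..n}. v i \<ge> 0"
    and va: "\<forall>i. 1 \<le> i \<and> i < n \<longrightarrow> v (i+1) \<le> v i"
    and i: "i \<in> {1..n}"
  shows "opt_welfare n \<beta> v ({1..n} - {i}) \<le> (\<Sum>l=1..k. (\<beta> l - \<beta> (l+1)) *
     (real l * (if l + 1 \<le> n then v (l+1) else 0) + (\<Sum>c=1..l. v c - (if l + 1 \<le> n then v (l+1) else 0))
      - (if i \<le> l then v i - (if l + 1 \<le> n then v (l+1) else 0) else 0)))"
    (is "_ \<le> ?B")
proof -
  define U where "U = {1..n} - {i}"
  define M where "M = {welfare \<beta> v U \<pi> | \<pi>. inj_on \<pi> U \<and> \<pi> ` U \<subseteq> {1..n}}"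
  have fU: "finite U" unfolding U_def by simp
  have kn: "k \<le> n" using bo unfolding beta_ok_def by simp
  have "M \<subseteq> (\<lambda>f. welfare \<beta> v U f) ` (U \<rightarrow>\<^sub>E {1..n})"
  proof
    fix x assume "x \<in> M"
    then obtain \<pi> where x: "x = welfare \<beta> v U \<pi>" "\<pi> ` U \<subseteq> {1..n}" unfolding M_def by blast
    have "x = welfare \<beta> v U (restrict \<pi> U)" unfolding x welfare_def by (rule sum.cong) auto
    moreover have "restrict \<pi> U \<in> U \<rightarrow>\<^sub>E {1..n}" using x(2) by auto
    ultimately show "x \<in> (\<lambda>f. welfare \<beta> v U f) ` (U \<rightarrow>\<^sub>E {1..n})" by blast
  qed
  moreover have "finite (U \<rightarrow>\<^sub>E {1..n})" using fU by (simp add: finite_PiE)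
  ultimately have fM: "finite M" using finite_subset by blast
  have "welfare \<beta> v U id \<in> M" unfolding M_def U_def by auto
  then have neM: "M \<noteq> {}" by blast
  have bound: "\<forall>x\<in>M. x \<le> ?B"
  proof
    fix x assume "x \<in> M"
    then obtain \<pi> where x: "x = welfare \<beta> v U \<pi>" "\<pi> ` U \<subseteq> {1..n}" "inj_on \<pi> U" unfolding M_def by blast
    have p1: "\<forall>c\<in>U. 1 \<le> \<pi> c" using x(2) by auto
    have "x = (\<Sum>l=1..k. (\<beta> l - \<beta> (l+1)) * (\<Sum>c\<in>{c\<in>U. \<pi> c \<le> l}. v c))"
      using welfare_decomp[OF bo fU p1] x(1) by simp
    also have "\<dots> \<le> ?B"
    proof (rule sum_mono)
      fix l assume l: "l \<in> {1..k}"
      have d0: "\<beta> (l+1) \<le> \<beta> l" using beta_le[OF bo, of l "l+1"] l by simp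
      define S where "S = {c\<in>U. \<pi> c \<le> l}"
      have "card S \<le> card {1..l}"
        by (rule card_inj_on_le[of \<pi>]) (use x(2,3) in \<open>auto simp: S_def intro: inj_on_subset\<close>)
      then have cS: "card S \<le> l" by simp
      have "(\<Sum>c\<in>S. v c) \<le> real l * (if l + 1 \<le> n then v (l+1) else 0) + (\<Sum>c=1..l. v c - (if l + 1 \<le> n then v (l+1) else 0))
      - (if i \<le> l then v i - (if l + 1 \<le> n then v (l+1) else 0) else 0)"
      proof -
        have Ss: "S \<subseteq> {1..n} - {i}" unfolding S_def U_def by auto
        have ln: "l \<le> n" using l kn by simp
        show ?thesis using subset_bound[OF vnn va i Ss cS ln] by simp
      qed
      then show "(\<beta> l - \<beta> (l+1)) * (\<Sum>c\<in>{c\<in>U. \<pi> c \<le> l}. v c) \<le> (\<beta> l - \<beta> (l+1)) *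
     (real l * (if l + 1 \<le> n then v (l+1) else 0) + (\<Sum>c=1..l. v c - (if l + 1 \<le> n then v (l+1) else 0))
      - (if i \<le> l then v i - (if l + 1 \<le> n then v (l+1) else 0) else 0))"
        using d0 unfolding S_def by (intro mult_left_mono) auto
    qed
    finally show "x \<le> ?B" .
  qed
  show ?thesis unfolding opt_welfare_def
    using Max.boundedI[OF fM neM] bound unfolding M_def U_def by blast
qed

lemma vcg_bound:
  fixes v :: "nat \<Rightarrow> real"
  assumes bo: "beta_ok n k \<beta>" and vnn: "\<forall>i\<in>{1..n}. v i \<ge> 0"
    and va: "\<forall>i. 1 \<le> i \<and> i < n \<longrightarrow> v (i+1) \<le> v i"
    and eff: "efficient n \<beta> v \<sigma>"
  shows "vcg_revenue n \<beta> v \<le> (\<Sum>l=1..k. real l * ((\<beta> l - \<beta> (l+1)) * (if l + 1 \<le> n then v (l+1) else 0)))"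
proof (cases "n = 0")
  case True
  then have "k = 0" using bo unfolding beta_ok_def by simp
  then show ?thesis using True unfolding vcg_revenue_def by simp
next
  case False
  then have n1: "real n \<ge> 1" by simp
  define A where "A = {1..n}"
  define s where "s = vcg_assignment n \<beta> v"
  define W where "W l = (if l + 1 \<le> n then v (l+1) else 0)" for l
  define X where "X l = (\<Sum>c=1..l. v c - W l)" for l
  define d where "d l = \<beta> l - \<beta> (l+1)" for l
  have kn: "k \<le> n" using bo unfolding beta_ok_def by simp
  have effs: "efficient n \<beta> v s" unfolding s_def vcg_assignment_def using someI[of "efficient n \<beta> v", OF eff] .
  define Ws where "Ws = welfare \<beta> v A s"
  have clarke: "clarke_payment n \<beta> v i = opt_welfare n \<beta> v (A - {i}) - (Ws - \<beta> (s i) * v i)"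
    if "i \<in> A" for i
    unfolding clarke_payment_def Ws_def welfare_def s_def[symmetric] A_def[symmetric]
    using that by (simp add: A_def sum_diff1)
  have R: "vcg_revenue n \<beta> v = (\<Sum>i\<in>A. opt_welfare n \<beta> v (A - {i})) - real n * Ws + Ws"
  proof -
    have "vcg_revenue n \<beta> v = (\<Sum>i\<in>A. opt_welfare n \<beta> v (A - {i}) - (Ws - \<beta> (s i) * v i))"
      unfolding vcg_revenue_def A_def[symmetric] by (rule sum.cong) (auto simp: clarke)
    also have "\<dots> = (\<Sum>i\<in>A. opt_welfare n \<beta> v (A - {i})) - real n * Ws + (\<Sum>i\<in>A. \<beta> (s i) * v i)"
      by (simp add: sum_subtractf sum.distrib A_def)
    finally show ?thesis unfolding Ws_def welfare_def by simp
  qed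
  have "assignment n id" unfolding assignment_def by simp
  then have WsId: "welfare \<beta> v A id \<le> Ws" using effs unfolding efficient_def Ws_def A_def by blast
  have Tl: "(\<Sum>c=1..l. v c) = X l + real l * W l" for l
    unfolding X_def by (simp add: sum_subtractf)
  have Wid: "welfare \<beta> v A id = (\<Sum>l=1..k. d l * (X l + real l * W l))"
  proof -
    have "welfare \<beta> v A id = (\<Sum>l=1..k. d l * (\<Sum>c\<in>{c\<in>A. id c \<le> l}. v c))"
      using welfare_decomp[OF bo, of A id v] unfolding d_def A_def by simp
    also have "\<dots> = (\<Sum>l=1..k. d l * (X l + real l * W l))"
    proof (rule sum.cong)
      fix l assume "l \<in> {1..k}"
      then have "{c\<in>A. id c \<le> l} = {1..l}" using kn unfolding A_def by auto
      then show "d l * (\<Sum>c\<in>{c\<in>A. id c \<le> l}. v c) = d l * (X l + real l * W l)" using Tl by simp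
    qed simp
    finally show ?thesis .
  qed
  have opt: "(\<Sum>i\<in>A. opt_welfare n \<beta> v (A - {i})) \<le>
      (\<Sum>i\<in>A. \<Sum>l=1..k. d l * (real l * W l + X l - (if i \<le> l then v i - W l else 0)))"
  proof (rule sum_mono)
    fix i assume i: "i \<in> A"
    note ob = opt_bound[OF bo vnn va, of i, folded W_def, folded X_def, folded d_def A_def]
    show "opt_welfare n \<beta> v (A - {i}) \<le> (\<Sum>l=1..k. d l * (real l * W l + X l - (if i \<le> l then v i - W l else 0)))"
      using ob i unfolding A_def by simp
  qed
  also have "\<dots> = (\<Sum>l=1..k. d l * (real n * (real l * W l + X l) - X l))"
  proof -
    have "(\<Sum>i\<in>A. \<Sum>l=1..k. d l * (real l * W l + X l - (if i \<le> l then v i - W l else 0)))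
        = (\<Sum>l=1..k. \<Sum>i\<in>A. d l * (real l * W l + X l - (if i \<le> l then v i - W l else 0)))"
      by (rule sum.swap)
    also have "\<dots> = (\<Sum>l=1..k. d l * (real n * (real l * W l + X l) - X l))"
    proof (rule sum.cong)
      fix l assume l: "l \<in> {1..k}"
      have "(\<Sum>i\<in>A. (if i \<le> l then v i - W l else 0)) = X l"
        unfolding A_def X_def using sum_if_le[of l n] l kn by simp
      then show "(\<Sum>i\<in>A. d l * (real l * W l + X l - (if i \<le> l then v i - W l else 0)))
          = d l * (real n * (real l * W l + X l) - X l)"
        by (simp add: sum_distrib_left[symmetric] sum_subtractf A_def)
    qed simp
    finally show ?thesis .
  qed
  finally have opt2: "(\<Sum>i\<in>A. opt_welfare n \<beta> v (A - {i})) \<le> (\<Sum>l=1..k. d l * (real n * (real l * W l + X l) - X l))" .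
  have "vcg_revenue n \<beta> v \<le> (\<Sum>l=1..k. d l * (real n * (real l * W l + X l) - X l))
       - (real n - 1) * (\<Sum>l=1..k. d l * (X l + real l * W l))"
  proof -
    have "(real n - 1) * (\<Sum>l=1..k. d l * (X l + real l * W l)) \<le> (real n - 1) * Ws"
      using WsId Wid n1 by (simp add: mult_left_mono)
    then show ?thesis using R opt2 by (simp add: algebra_simps)
  qed
  also have "\<dots> = (\<Sum>l=1..k. real l * (d l * W l))"
    by (simp add: sum_distrib_left sum_subtractf[symmetric] algebra_simps)
  finally show ?thesis unfolding d_def W_def .
qed

theorem theorem2:
  fixes n k :: nat and \<beta> v b :: "nat \<Rightarrow> real" and rank :: "(nat \<Rightarrow> real) \<Rightarrow> nat \<Rightarrow> nat"
  assumes "beta_ok n k \<beta>"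
    and "\<forall>i\<in>{1..n}. v i \<ge> 0"
    and "\<forall>i. 1 \<le> i \<and> i < n \<longrightarrow> v (i+1) \<le> v i"
    and "gsp_rule n rank"
    and "gsp_nash n k rank \<beta> v b"
    and "efficient n \<beta> v (rank b)"
  shows "gsp_revenue n k rank b \<ge>
    (1/2) * (vcg_revenue n \<beta> v
      - (\<Sum>j=1..k. (\<beta> j - \<beta> (j+1)) * (if j + 1 \<le> n then v (j+1) else 0)))"
proof -
  note bo = assms(1) and vnn = assms(2) and va = assms(3) and rule = assms(4)
    and nash = assms(5) and eff = assms(6)
  define P where "P = (\<lambda>j. if j \<le> k then nth_highest n b (j+1) else 0)"
  define D where "D l = (\<beta> l - \<beta> (l+1)) * (if l + 1 \<le> n then v (l+1) else 0)" for l
  have kn: "k \<le> n" using bo unfolding beta_ok_def by simp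
  have bnn: "\<forall>i\<in>{1..n}. b i \<ge> 0" using nash unfolding gsp_nash_def by blast
  have P0: "\<forall>j. P j \<ge> 0" unfolding P_def using nth_nonneg[OF rule bnn] by simp
  have Pk: "\<forall>j>k. P j = 0" unfolding P_def by simp
  have step: "\<forall>i. 1 \<le> i \<and> i \<le> k \<longrightarrow> D (i+1) + P (i+2) \<le> P i"
  proof (intro allI impI)
    fix i assume i: "1 \<le> i \<and> i \<le> k"
    show "D (i+1) + P (i+2) \<le> P i"
    proof -
      have e: "i + 1 + 1 = i + 2" by simp
      show ?thesis unfolding D_def e using chain_step[OF bo vnn va rule nash eff P_def, of i] i by blast
    qed
  qed
  have cs: "(\<Sum>l=1..k. (real l - 1) * D l) \<le> 2 * (\<Sum>j=1..k. P j)" using chain_sum[OF P0 Pk step] .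
  have rev: "gsp_revenue n k rank b = (\<Sum>j=1..k. P j)"
  proof -
    have bij: "bij_betw (rank b) {1..n} {1..n}" using gsp_consis[OF rule, of b] unfolding consis_def by blast
    have "gsp_revenue n k rank b = (\<Sum>i\<in>{1..n}. P (rank b i))"
      unfolding gsp_revenue_def gsp_payment_def P_def by simp
    also have "\<dots> = (\<Sum>t\<in>{1..n}. P t)" using sum.reindex_bij_betw[OF bij] .
    also have "\<dots> = (\<Sum>t\<in>{1..n}. if t \<le> k then nth_highest n b (t+1) else 0)" unfolding P_def ..
    also have "\<dots> = (\<Sum>t=1..k. nth_highest n b (t+1))" using sum_if_le[OF kn] .
    also have "\<dots> = (\<Sum>j=1..k. P j)" unfolding P_def by simp
    finally show ?thesis .
  qed
  have vb: "vcg_revenue n \<beta> v \<le> (\<Sum>l=1..k. real l * D l)"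
    using vcg_bound[OF bo vnn va eff] unfolding D_def .
  have "(\<Sum>l=1..k. (real l - 1) * D l) = (\<Sum>l=1..k. real l * D l) - (\<Sum>l=1..k. D l)"
    by (simp add: algebra_simps sum_subtractf)
  then show ?thesis using cs rev vb unfolding D_def by simp
qed

end
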